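(* For all integers $M,N,p,r\ge1$: (1) $c_p^r(1,N)=N^{p-1}$; (2) $c_p^r(M,1)=M^{p-1}$; (3) $c_1^r(M,N)=1$; (4) $c_p^1(M,N)=(MN)^{p-1}$.
   Context: For integers $M,N,p,r\ge1$, consider triples $(i,a,b)$ with $i=(i_1,\dots,i_r)\in\mathbb Z_M^r$, $a=(a_1,\dots,a_p)\in\mathbb Z_M^p$, $b=(b_1,\dots,b_p)\in\mathbb Z_N^p$, with cyclic conventions $i_{r+1}=i_1$, $b_{p+1}=b_1$. For $x\in\{1,\dots,r\}$, condition $(E_x)$ says that the multisets $\{(i_x+a_y,b_y),(i_{x+1}+a_y,b_{y+1}):y=1,\dots,p\}$ and $\{(i_x+a_y,b_{y+1}),(i_{x+1}+a_y,b_y):y=1,\dots,p\}$ of elements of $\mathbb Z_M\times\mathbb Z_N$ (counted with multiplicity) coincide. Define $c_p^r(M,N)=\frac{1}{M^{r+1}N}\#\{(i,a,b):(E_x)\text{ holds for all }x\}$. *)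

theory Defs
  imports Main "HOL-Library.Multiset" "HOL-Library.FuncSet" Complex_Main
begin

text \<open>Z_M is represented by {0..<M}; tuples indexed by {0..<r} (0-based), as
  extensional functions (PiE). Cyclic successor of index x is (x+1) mod r.\<close>

definition cond_E :: "nat \<Rightarrow> nat \<Rightarrow> nat \<Rightarrow> (nat \<Rightarrow> nat) \<Rightarrow> (nat \<Rightarrow> nat) \<Rightarrow> (nat \<Rightarrow> nat) \<Rightarrow> nat \<Rightarrow> bool" where
  "cond_E M p r i a b x \<longleftrightarrow>
     (let Y = mset_set {0..<p}; x' = (x + 1) mod r in
        image_mset (\<lambda>y. ((i x + a y) mod M, b y)) Y
      + image_mset (\<lambda>y. ((i x' + a y) mod M, b ((y + 1) mod p))) Y
      = image_mset (\<lambda>y. ((i x + a y) mod M, b ((y + 1) mod p))) Y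
      + image_mset (\<lambda>y. ((i x' + a y) mod M, b y)) Y)"

definition good_triples :: "nat \<Rightarrow> nat \<Rightarrow> nat \<Rightarrow> nat \<Rightarrow> ((nat \<Rightarrow> nat) \<times> (nat \<Rightarrow> nat) \<times> (nat \<Rightarrow> nat)) set" where
  "good_triples M N p r =
     {(i, a, b). i \<in> PiE {0..<r} (\<lambda>_. {0..<M}) \<and> a \<in> PiE {0..<p} (\<lambda>_. {0..<M})
        \<and> b \<in> PiE {0..<p} (\<lambda>_. {0..<N}) \<and> (\<forall>x \<in> {0..<r}. cond_E M p r i a b x)}"

definition c_const :: "nat \<Rightarrow> nat \<Rightarrow> nat \<Rightarrow> nat \<Rightarrow> real" where
  "c_const p r M N = real (card (good_triples M N p r)) / (real M ^ (r + 1) * real N)"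

end

theory Submission
  imports Defs
begin

lemma card_full:
  assumes "\<And>i a b x. i \<in> PiE {0..<r} (\<lambda>_. {0..<M}) \<Longrightarrow> a \<in> PiE {0..<p} (\<lambda>_. {0..<M})
        \<Longrightarrow> b \<in> PiE {0..<p} (\<lambda>_. {0..<N}) \<Longrightarrow> x < r \<Longrightarrow> cond_E M p r i a b x"
  shows "card (good_triples M N p r) = M ^ r * M ^ p * N ^ p"
proof -
  have "good_triples M N p r = PiE {0..<r} (\<lambda>_. {0..<M}) \<times> PiE {0..<p} (\<lambda>_. {0..<M}) \<times> PiE {0..<p} (\<lambda>_. {0..<N})"
    unfolding good_triples_def using assms by auto
  then show ?thesis by (simp add: card_cartesian_product card_PiE)
qed

lemma b1: fixes b :: "nat \<Rightarrow> nat" and y p :: nat assumes "b \<in> PiE {0..<p} (\<lambda>_. {0..<(1::nat)})" "y < p" shows "b y = 0"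
  using PiE_mem[OF assms(1), of y] assms(2) by simp

theorem proposition3p1:
  fixes M N p r :: nat
  assumes "M \<ge> 1" "N \<ge> 1" "p \<ge> 1" "r \<ge> 1"
  shows "c_const p r 1 N = real N ^ (p - 1) \<and>
         c_const p r M 1 = real M ^ (p - 1) \<and>
         c_const 1 r M N = 1 \<and>
         c_const p 1 M N = (real M * real N) ^ (p - 1)"
proof -
  obtain q where q: "p = Suc q" using assms by (cases p) auto
  have M0: "real M \<noteq> 0" "real N \<noteq> 0" using assms by auto
  have h1: "card (good_triples 1 N p r) = N ^ p"
    using card_full[of r 1 p N] by (simp add: cond_E_def Let_def add.commute)
  have h2: "card (good_triples M 1 p r) = M ^ r * M ^ p"
  proof -
    have "cond_E M p r i a b x" if "b \<in> PiE {0..<p} (\<lambda>_. {0..<(1::nat)})" for i a b x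
    proof -
      have "\<And>y. y \<in> {0..<p} \<Longrightarrow> b ((y+1) mod p) = b y"
        using b1[OF that] q by auto
      then have e: "\<And>f. image_mset (\<lambda>y. (f y, b ((y + 1) mod p))) (mset_set {0..<p})
                     = image_mset (\<lambda>y. (f y, b y)) (mset_set {0..<p})"
        by (intro image_mset_cong) (simp add: elem_mset_set)
      show ?thesis unfolding cond_E_def Let_def e by (simp add: add.commute)
    qed
    then show ?thesis using card_full[of r M p 1] by simp
  qed
  have h3: "card (good_triples M N 1 r) = M ^ r * M * N"
    using card_full[of r M 1 N] by (simp add: cond_E_def Let_def add.commute)
  have h4: "card (good_triples M N p 1) = M * M ^ p * N ^ p"
    using card_full[of 1 M p N] by (simp add: cond_E_def Let_def add.commute)
  show ?thesis
    unfolding c_const_def h1 h2 h3 h4 using M0 q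
    by (simp add: field_simps power_mult_distrib)
qed

end
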